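(* Let $\mathcal X$ be finite and $F=(F_x)_{x\in\mathcal X}$ a random vector whose entries $F_x$ are $\sigma_x$-sub-Gaussian with mean $\mu_x$, $\sigma_x\ge0$. For $p\in\Delta(\mathcal X)$ and $\tau\in(0,\infty)^{\mathcal X}$ let $$\mathcal V_\tau(p):=\sum_{x\in\mathcal X}p_x\Big(\mu_x+\frac{\sigma_x^2}{2\tau_x}-\tau_x\ln p_x\Big).$$ (i) If $p_x\in(0,1)$ and $\sigma_x>0$ for all $x$, then $\min_\tau\mathcal V_\tau(p)$ is attained at $\tau^*_x=\sigma_x/\sqrt{-2\ln p_x}$ and equals $\mathcal V(p):=\sum_x p_x\big(\mu_x+\sqrt{2\ln(1/p_x)}\,\sigma_x\big)$. (ii) $\mathcal V$ (with $0\cdot\sqrt{2\ln(1/0)}:=0$) is concave on $\Delta(\mathcal X)$, and strictly concave if $\sigma_x>0$ for all $x$. (iii) If the maximizer $X^*=\arg\max_xF_x$ is almost surely unique, then with $\pi_x:=\mathbb P[x\in X^*]$, $$\max_{p\in\Delta(\mathcal X)}\mathcal V(p)\ge\mathcal V(\pi)\ge\mathbb E\big[\max_{x}F_x\big].$$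
   Context: A real random variable $X$ is $\sigma$-sub-Gaussian if $\mathbb E[\exp(\lambda(X-\mathbb E X))]\le\exp(\sigma^2\lambda^2/2)$ for all $\lambda\in\mathbb R$. $\Delta(\mathcal X)$ is the probability simplex on $\mathcal X$. *)

theory Defs
  imports "HOL-Analysis.Analysis" "HOL-Probability.Probability"
begin

definition subgaussian :: "'b measure \<Rightarrow> ('b \<Rightarrow> real) \<Rightarrow> real \<Rightarrow> bool" where
  "subgaussian M X \<sigma> \<longleftrightarrow>
     X \<in> borel_measurable M \<and> integrable M X \<and>
     (\<forall>l::real. integrable M (\<lambda>\<omega>. exp (l * (X \<omega> - integral\<^sup>L M X))) \<and>
        integral\<^sup>L M (\<lambda>\<omega>. exp (l * (X \<omega> - integral\<^sup>L M X))) \<le> exp (\<sigma>\<^sup>2 * l\<^sup>2 / 2))"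

definition prob_simplex :: "(real ^ 'a::finite) set" where
  "prob_simplex = {p. (\<forall>x. 0 \<le> p $ x) \<and> (\<Sum>x\<in>UNIV. p $ x) = 1}"

definition Vtau :: "('a::finite \<Rightarrow> real) \<Rightarrow> ('a \<Rightarrow> real) \<Rightarrow> ('a \<Rightarrow> real) \<Rightarrow> real ^ 'a \<Rightarrow> real" where
  "Vtau \<mu> \<sigma> \<tau> p = (\<Sum>x\<in>UNIV. p $ x * (\<mu> x + (\<sigma> x)\<^sup>2 / (2 * \<tau> x) - \<tau> x * ln (p $ x)))"

definition Vfun :: "('a::finite \<Rightarrow> real) \<Rightarrow> ('a \<Rightarrow> real) \<Rightarrow> real ^ 'a \<Rightarrow> real" where
  "Vfun \<mu> \<sigma> p = (\<Sum>x\<in>UNIV. if p $ x = 0 then 0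
        else p $ x * (\<mu> x + sqrt (2 * ln (1 / p $ x)) * \<sigma> x))"

definition strictly_concave_on :: "'a::real_vector set \<Rightarrow> ('a \<Rightarrow> real) \<Rightarrow> bool" where
  "strictly_concave_on S f \<longleftrightarrow> convex S \<and>
     (\<forall>x\<in>S. \<forall>y\<in>S. x \<noteq> y \<longrightarrow> (\<forall>t. 0 < t \<and> t < 1 \<longrightarrow>
        f ((1 - t) *\<^sub>R x + t *\<^sub>R y) > (1 - t) * f x + t * f y))"

end

theory Submission
  imports Defs
begin

definition gg :: "real \<Rightarrow> real" where
  "gg s = (if s = 0 then 0 else s * sqrt (2 * ln (1 / s)))"

lemma gg_pos_eq: "0 < s \<Longrightarrow> gg s = s * sqrt (- 2 * ln s)"
  by (simp add: gg_def ln_div)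

lemma gg_deriv:
  assumes "0 < s" "s < 1"
  shows "(gg has_real_derivative
           (sqrt (- 2 * ln s) - 1 / sqrt (- 2 * ln s))) (at s)"
proof -
  have L: "ln s < 0" using assms by simp
  have "((\<lambda>s. s * sqrt (- 2 * ln s)) has_real_derivative
           (sqrt (- 2 * ln s) - 1 / sqrt (- 2 * ln s))) (at s)"
  proof -
    have d1: "((\<lambda>x. -2 * ln x) has_real_derivative (-2 * (1/s))) (at s)"
      by (auto intro!: derivative_eq_intros simp: assms)
    have d2: "((\<lambda>x. sqrt(-2*ln x)) has_real_derivative (inverse (sqrt (-2 * ln s)) / 2 * (-2*(1/s)))) (at s)"
      by (rule DERIV_chain2[OF DERIV_real_sqrt d1]) (use L in simp)
    have d3: "((\<lambda>x. x * sqrt(-2*ln x)) has_real_derivative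
       (s * (inverse (sqrt (-2 * ln s)) / 2 * (-2*(1/s))) + 1 * sqrt(-2*ln s))) (at s)"
      by (rule DERIV_mult'[OF DERIV_ident d2])
    have e: "s * (inverse (sqrt (-2 * ln s)) / 2 * (-2*(1/s))) + 1 * sqrt(-2*ln s) = sqrt (- 2 * ln s) - 1 / sqrt (- 2 * ln s)"
      using assms by (simp add: field_simps)
    show ?thesis using d3 e by simp
  qed
  then show ?thesis
    by (rule has_field_derivative_transform_within_open[where S="{0<..}"]) (use assms in \<open>auto simp: gg_pos_eq\<close>)
qed

lemma gg_bound:
  assumes "0 \<le> s" "s \<le> 1"
  shows "\<bar>gg s\<bar> \<le> sqrt (2 * s)"
proof (cases "s = 0")
  case True then show ?thesis by (simp add: gg_def)
next
  case False
  then have s: "0 < s" using assms by simp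
  have l0: "ln (1/s) \<le> 1/s - 1" using s by (intro ln_le_minus_one) simp
  have "ln (1/s) = - ln s" using s by (simp add: ln_div)
  then have l: "- 2 * ln s \<le> 2 * (1 / s)" using l0 by linarith
  have ln0: "0 \<le> - 2 * ln s" using assms s by simp
  have eq0: "sqrt (s^2 * (- 2 * ln s)) = s * sqrt (- 2 * ln s)"
    using s by (simp only: real_sqrt_mult real_sqrt_abs)
  have eq: "gg s = sqrt (s^2 * (- 2 * ln s))"
    using s eq0 by (simp only: gg_pos_eq)
  have "s^2 * (- 2 * ln s) \<le> s^2 * (2 * (1/s))"
    by (rule mult_left_mono[OF l zero_le_power2])
  also have "\<dots> = 2 * s" using s by (simp add: power2_eq_square)
  finally have le: "sqrt (s^2 * (- 2 * ln s)) \<le> sqrt (2 * s)" by (rule real_sqrt_le_mono)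
  have nn: "gg s \<ge> 0" using gg_pos_eq[OF s] s ln0 by simp
  show ?thesis using abs_of_nonneg[OF nn] eq le by linarith
qed

lemma gg_cont: "continuous_on {0..1} gg"
  unfolding continuous_on_eq_continuous_within
proof
  fix x :: real assume x: "x \<in> {0..1}"
  show "continuous (at x within {0..1}) gg"
  proof (cases "x = 0")
    case True
    have lim: "((\<lambda>s. sqrt (2 * s)) \<longlongrightarrow> sqrt (2 * 0)) (at 0 within {0..1})"
      by (intro tendsto_intros)
    have "(gg \<longlongrightarrow> 0) (at 0 within {0..1})"
      apply (rule Lim_null_comparison[where g = "\<lambda>s. sqrt (2 * s)"])
       apply (auto simp: eventually_at_filter gg_bound)
      using lim by simp
    then show ?thesis using True by (simp add: continuous_within gg_def)
  next
    case False
    then have x0: "0 < x" using x by simp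
    have "isCont (\<lambda>s. s * sqrt (- 2 * ln s)) x"
      using x0 by (intro continuous_intros) auto
    moreover have ev: "eventually (\<lambda>s. gg s = s * sqrt (- 2 * ln s)) (nhds x)"
      using eventually_nhds_in_open[of "{0<..}" x] x0
      by (auto elim!: eventually_mono simp: gg_pos_eq)
    ultimately have "isCont gg x" using isCont_cong[OF ev] by simp
    then show ?thesis by (rule continuous_at_imp_continuous_at_within)
  qed
qed

definition gD :: "real \<Rightarrow> real" where
  "gD s = sqrt (- 2 * ln s) - 1 / sqrt (- 2 * ln s)"

lemma gD_decr:
  assumes "0 < s1" "s1 < s2" "s2 < 1"
  shows "gD s2 < gD s1"
proof -
  have "ln s1 < ln s2" "ln s2 < 0" using assms by auto
  then have r: "sqrt (- 2 * ln s2) < sqrt (- 2 * ln s1)" "0 < sqrt (- 2 * ln s2)" by auto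
  then have "1 / sqrt (- 2 * ln s1) < 1 / sqrt (- 2 * ln s2)"
    by (intro divide_strict_left_mono) auto
  then show ?thesis using r unfolding gD_def by linarith
qed

lemma gg_mvt:
  assumes "0 \<le> a" "a < b" "b \<le> 1"
  shows "\<exists>z. a < z \<and> z < b \<and> gg b - gg a = (b - a) * gD z"
proof -
  have c: "continuous_on {a..b} gg"
    using gg_cont by (rule continuous_on_subset) (use assms in auto)
  have d: "gg differentiable (at x)" if "a < x" "x < b" for x
    using gg_deriv[of x] that assms unfolding real_differentiable_def gD_def by auto
  obtain l z where z: "a < z" "z < b" "DERIV gg z :> l" "gg b - gg a = (b - a) * l"
    using MVT[OF assms(2) c d] by blast
  have "DERIV gg z :> gD z" using gg_deriv[of z] z assms unfolding gD_def by auto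
  then have "l = gD z" using z(3) DERIV_unique by blast
  then show ?thesis using z by blast
qed

lemma gg_strict_lt:
  assumes "0 \<le> a" "a < b" "b \<le> 1" "0 < t" "t < 1"
  shows "(1 - t) * gg a + t * gg b < gg ((1 - t) * a + t * b)"
proof -
  define c where "c = (1 - t) * a + t * b"
  have ca: "c - a = t * (b - a)" unfolding c_def by (simp add: algebra_simps)
  have bc: "b - c = (1 - t) * (b - a)" unfolding c_def by (simp add: algebra_simps)
  have p1: "0 < t * (b - a)" using assms by auto
  have p2: "0 < (1 - t) * (b - a)" using assms by auto
  have acb1: "a < c" using ca p1 by linarith
  have acb2: "c < b" using bc p2 by linarith
  note acb = acb1 acb2
  obtain z1 where z1: "a < z1" "z1 < c" "gg c - gg a = (c - a) * gD z1"
    using gg_mvt[of a c] acb assms by auto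
  obtain z2 where z2: "c < z2" "z2 < b" "gg b - gg c = (b - c) * gD z2"
    using gg_mvt[of c b] acb assms by auto
  have dd: "gD z2 < gD z1" using gD_decr[of z1 z2] z1 z2 assms by auto
  have "(1 - t) * gg a + t * gg b = gg c - t * (1 - t) * (b - a) * (gD z1 - gD z2)"
  proof -
    have ga: "gg a = gg c - t * (b - a) * gD z1" using z1(3) ca by simp
    have gb: "gg b = gg c + (1 - t) * (b - a) * gD z2" using z2(3) bc by simp
    show ?thesis unfolding ga gb by (simp add: algebra_simps)
  qed
  moreover have "0 < t * (1 - t) * (b - a) * (gD z1 - gD z2)"
    using assms dd by (intro mult_pos_pos) auto
  ultimately show ?thesis unfolding c_def by linarith
qed

lemma gg_strict:
  assumes "0 \<le> a" "a \<le> 1" "0 \<le> b" "b \<le> 1" "a \<noteq> b" "0 < t" "t < 1"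
  shows "(1 - t) * gg a + t * gg b < gg ((1 - t) * a + t * b)"
proof (cases "a < b")
  case True then show ?thesis using gg_strict_lt[of a b t] assms by blast
next
  case False
  then have "b < a" using assms by auto
  then have "(1 - (1 - t)) * gg b + (1 - t) * gg a < gg ((1 - (1 - t)) * b + (1 - t) * a)"
    using gg_strict_lt[of b a "1 - t"] assms by simp
  then have "t * gg b + (1 - t) * gg a < gg (t * b + (1 - t) * a)" by simp
  then show ?thesis by (metis add.commute)
qed

lemma gg_concave:
  assumes "0 \<le> a" "a \<le> 1" "0 \<le> b" "b \<le> 1" "0 \<le> t" "t \<le> 1"
  shows "(1 - t) * gg a + t * gg b \<le> gg ((1 - t) * a + t * b)"
proof (cases "a = b \<or> t = 0 \<or> t = 1")
  case True
  then consider "a = b" | "t = 0" | "t = 1" by blast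
  then show ?thesis
  proof cases
    case 1
    have "(1 - t) * a + t * a = a" by (simp add: algebra_simps)
    moreover have "(1 - t) * gg a + t * gg a = gg a" by (simp add: algebra_simps)
    ultimately show ?thesis using 1 by simp
  qed simp_all
next
  case False
  then have "a \<noteq> b" "0 < t" "t < 1" using assms by auto
  then show ?thesis using gg_strict[of a b t] assms by linarith
qed


lemma Vfun_eq: "Vfun \<mu> \<sigma> p = (\<Sum>x\<in>UNIV. \<mu> x * p $ x + \<sigma> x * gg (p $ x))"
  unfolding Vfun_def by (intro sum.cong refl) (simp add: gg_def algebra_simps)

lemma simplex_bounds: "p \<in> prob_simplex \<Longrightarrow> 0 \<le> p $ x \<and> p $ x \<le> 1"
proof -
  assume p: "p \<in> prob_simplex"
  then have nn: "\<forall>x. 0 \<le> p $ x" and s1: "(\<Sum>x\<in>UNIV. p $ x) = 1" by (auto simp: prob_simplex_def)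
  have "p $ x \<le> (\<Sum>x\<in>UNIV. p $ x)"
    by (rule member_le_sum) (use nn in auto)
  then show ?thesis using nn s1 by auto
qed

lemma convex_simplex: "convex (prob_simplex :: (real ^ 'a::finite) set)"
  unfolding convex_def
proof (intro ballI allI impI)
  fix p q :: "real ^ 'a" and u v :: real
  assume p: "p \<in> prob_simplex" and q: "q \<in> prob_simplex" and uv: "0 \<le> u" "0 \<le> v" "u + v = 1"
  have "(\<Sum>x\<in>UNIV. u * p $ x + v * q $ x) = u * (\<Sum>x\<in>UNIV. p $ x) + v * (\<Sum>x\<in>UNIV. q $ x)"
    by (simp add: sum.distrib sum_distrib_left)
  also have "\<dots> = 1" using p q uv by (simp add: prob_simplex_def)
  finally show "u *\<^sub>R p + v *\<^sub>R q \<in> prob_simplex"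
    using p q uv unfolding prob_simplex_def by auto
qed

lemma compact_simplex: "compact (prob_simplex :: (real ^ 'a::finite) set)"
proof -
  have eq: "(prob_simplex :: (real ^ 'a) set) = {p. \<forall>x. 0 \<le> p $ x} \<inter> {p. (\<Sum>x\<in>UNIV. p $ x) = 1}"
    unfolding prob_simplex_def by auto
  have c: "closed (prob_simplex :: (real ^ 'a) set)"
    unfolding eq by (intro closed_Int closed_Collect_all closed_Collect_le closed_Collect_eq continuous_intros)
  have b: "bounded (prob_simplex :: (real ^ 'a) set)"
    unfolding bounded_iff
  proof (intro exI ballI)
    fix p :: "real ^ 'a" assume p: "p \<in> prob_simplex"
    have "norm p \<le> (\<Sum>i\<in>UNIV. \<bar>p $ i\<bar>)" by (rule norm_le_l1_cart)
    also have "\<dots> = (\<Sum>i\<in>UNIV. p $ i)" using p by (simp add: prob_simplex_def)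
    also have "\<dots> = 1" using p by (simp add: prob_simplex_def)
    finally show "norm p \<le> 1" .
  qed
  show ?thesis using c b by (simp add: compact_eq_bounded_closed)
qed

lemma cont_Vfun: "continuous_on prob_simplex (Vfun \<mu> \<sigma>)"
proof -
  have g: "continuous_on prob_simplex (\<lambda>p. gg (p $ x))" for x
    by (rule continuous_on_compose2[OF gg_cont]) (auto intro!: continuous_intros simp: simplex_bounds)
  show ?thesis unfolding Vfun_eq[abs_def]
    by (intro continuous_intros g)
qed

lemma term_concave:
  assumes "0 \<le> a" "a \<le> 1" "0 \<le> b" "b \<le> 1" "0 \<le> t" "t \<le> 1" "0 \<le> s"
  shows "(1 - t) * (m * a + s * gg a) + t * (m * b + s * gg b)
          \<le> m * ((1 - t) * a + t * b) + s * gg ((1 - t) * a + t * b)"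
proof -
  have "s * ((1 - t) * gg a + t * gg b) \<le> s * gg ((1 - t) * a + t * b)"
    using gg_concave[OF assms(1-6)] assms(7) by (rule mult_left_mono)
  then show ?thesis by (simp add: algebra_simps)
qed

lemma term_strict:
  assumes "0 \<le> a" "a \<le> 1" "0 \<le> b" "b \<le> 1" "a \<noteq> b" "0 < t" "t < 1" "0 < s"
  shows "(1 - t) * (m * a + s * gg a) + t * (m * b + s * gg b)
          < m * ((1 - t) * a + t * b) + s * gg ((1 - t) * a + t * b)"
proof -
  have "s * ((1 - t) * gg a + t * gg b) < s * gg ((1 - t) * a + t * b)"
    using gg_strict[OF assms(1-7)] assms(8) by (rule mult_strict_left_mono)
  then show ?thesis by (simp add: algebra_simps)
qed

lemma Vfun_concave:
  assumes "\<And>x. 0 \<le> \<sigma> x"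
  shows "concave_on prob_simplex (Vfun \<mu> \<sigma>)"
  unfolding concave_on_def convex_on_def
proof (intro conjI convex_simplex ballI allI impI)
  fix p q :: "real ^ 'a" and u v :: real
  assume p: "p \<in> prob_simplex" and q: "q \<in> prob_simplex" and uv: "0 \<le> u" "0 \<le> v" "u + v = 1"
  have u: "u = 1 - v" using uv by simp
  have "u * (\<Sum>x\<in>UNIV. \<mu> x * p $ x + \<sigma> x * gg (p $ x)) + v * (\<Sum>x\<in>UNIV. \<mu> x * q $ x + \<sigma> x * gg (q $ x))
     = (\<Sum>x\<in>UNIV. (1 - v) * (\<mu> x * p $ x + \<sigma> x * gg (p $ x)) + v * (\<mu> x * q $ x + \<sigma> x * gg (q $ x)))"
    unfolding u by (simp only: sum.distrib sum_distrib_left[symmetric])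
  also have "\<dots> \<le> (\<Sum>x\<in>UNIV. \<mu> x * ((1 - v) * p $ x + v * q $ x) + \<sigma> x * gg ((1 - v) * p $ x + v * q $ x))"
    by (intro sum_mono term_concave) (use simplex_bounds[OF p] simplex_bounds[OF q] uv assms in auto)
  finally show "- Vfun \<mu> \<sigma> (u *\<^sub>R p + v *\<^sub>R q) \<le> u * - Vfun \<mu> \<sigma> p + v * - Vfun \<mu> \<sigma> q"
    unfolding Vfun_eq u by simp
qed

lemma Vfun_strict:
  assumes "\<And>x. 0 < \<sigma> x"
  shows "strictly_concave_on prob_simplex (Vfun \<mu> \<sigma>)"
  unfolding strictly_concave_on_def
proof (intro conjI convex_simplex ballI allI impI)
  fix p q :: "real ^ 'a" and t :: real
  assume p: "p \<in> prob_simplex" and q: "q \<in> prob_simplex" and pq: "p \<noteq> q" and t: "0 < t \<and> t < 1"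
  obtain i where i: "p $ i \<noteq> q $ i" using pq by (metis vec_eq_iff)
  have "(1 - t) * (\<Sum>x\<in>UNIV. \<mu> x * p $ x + \<sigma> x * gg (p $ x)) + t * (\<Sum>x\<in>UNIV. \<mu> x * q $ x + \<sigma> x * gg (q $ x))
     = (\<Sum>x\<in>UNIV. (1 - t) * (\<mu> x * p $ x + \<sigma> x * gg (p $ x)) + t * (\<mu> x * q $ x + \<sigma> x * gg (q $ x)))"
    by (simp only: sum.distrib sum_distrib_left[symmetric])
  also have "\<dots> < (\<Sum>x\<in>UNIV. \<mu> x * ((1 - t) * p $ x + t * q $ x) + \<sigma> x * gg ((1 - t) * p $ x + t * q $ x))"
  proof (rule sum_strict_mono_ex1)
    show "\<forall>x\<in>UNIV. (1 - t) * (\<mu> x * p $ x + \<sigma> x * gg (p $ x)) + t * (\<mu> x * q $ x + \<sigma> x * gg (q $ x))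
       \<le> \<mu> x * ((1 - t) * p $ x + t * q $ x) + \<sigma> x * gg ((1 - t) * p $ x + t * q $ x)"
      using simplex_bounds[OF p] simplex_bounds[OF q] t assms[THEN less_imp_le]
      by (auto intro!: term_concave)
    show "\<exists>x\<in>UNIV. (1 - t) * (\<mu> x * p $ x + \<sigma> x * gg (p $ x)) + t * (\<mu> x * q $ x + \<sigma> x * gg (q $ x))
       < \<mu> x * ((1 - t) * p $ x + t * q $ x) + \<sigma> x * gg ((1 - t) * p $ x + t * q $ x)"
      using simplex_bounds[OF p, of i] simplex_bounds[OF q, of i] t assms[of i] i
      by (intro bexI[of _ i] term_strict) auto
  qed simp
  finally show "(1 - t) * Vfun \<mu> \<sigma> p + t * Vfun \<mu> \<sigma> q < Vfun \<mu> \<sigma> ((1 - t) *\<^sub>R p + t *\<^sub>R q)"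
    unfolding Vfun_eq by simp
qed


lemma elem_opt:
  assumes P: "0 < P" "P \<le> 1" and sg: "0 \<le> \<sigma>"
    and H: "\<And>l. 0 < l \<Longrightarrow> l * D \<le> P * (\<sigma>^2 * l^2 / 2 - ln P)"
  shows "D \<le> \<sigma> * (P * sqrt (- 2 * ln P))"
proof -
  define L where "L = - ln P"
  have L0: "0 \<le> L" using P unfolding L_def by simp
  have H': "l * D \<le> P * (\<sigma>^2 * l^2 / 2 + L)" if "0 < l" for l
    using H[OF that] unfolding L_def by simp
  consider "\<sigma> = 0" | "L = 0" "0 < \<sigma>" | "0 < L" "0 < \<sigma>" using L0 sg by force
  then show ?thesis
  proof cases
    case 1
    show ?thesis
    proof (rule ccontr)
      assume "\<not> ?thesis"
      then have D: "0 < D" using 1 by simp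
      define l where "l = (P * L + 1) / D"
      have l: "0 < l" unfolding l_def using D P L0 by (intro divide_pos_pos) (auto intro: add_nonneg_pos)
      have "l * D = P * L + 1" unfolding l_def using D by simp
      then show False using H'[OF l] 1 by simp
    qed
  next
    case 2
    show ?thesis
    proof (rule ccontr)
      assume "\<not> ?thesis"
      then have D: "0 < D" using 2 by (simp add: L_def)
      define l where "l = D / (P * \<sigma>^2)"
      have l: "0 < l" unfolding l_def using D P 2 by simp
      have "l * D \<le> P * (\<sigma>^2 * l^2 / 2)" using H'[OF l] 2 by simp
      also have "\<dots> = (l * D) / 2" unfolding l_def using P 2 by (simp add: power2_eq_square field_simps)
      finally show False using l D by (simp add: zero_less_mult_iff)
    qed
  next
    case 3
    define r where "r = sqrt (2 * L)"
    have r: "0 < r" "r^2 = 2 * L" using 3 unfolding r_def by auto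
    define l where "l = r / \<sigma>"
    have l: "0 < l" unfolding l_def using r 3 by simp
    have "l * D \<le> P * (\<sigma>^2 * l^2 / 2 + L)" by (rule H'[OF l])
    also have "\<sigma>^2 * l^2 / 2 = L" unfolding l_def using r 3 by (simp add: power_divide)
    finally have "l * D \<le> P * (2 * L)" by simp
    then have "r * D \<le> \<sigma> * (P * r^2)" using 3 r unfolding l_def by (simp add: field_simps)
    then have "r * D \<le> r * (\<sigma> * (P * r))" by (simp add: power2_eq_square algebra_simps)
    then have "D \<le> \<sigma> * (P * r)" using r by simp
    moreover have "r = sqrt (- 2 * ln P)" unfolding r_def L_def by simp
    ultimately show ?thesis by simp
  qed
qed

lemma sg_bound:
  assumes M: "prob_space M" and sg: "subgaussian M X \<sigma>" and A: "A \<in> sets M" and s0: "0 \<le> \<sigma>"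
  shows "integral\<^sup>L M (\<lambda>\<omega>. X \<omega> * indicator A \<omega>) \<le> integral\<^sup>L M X * measure M A + \<sigma> * gg (measure M A)"
proof -
  interpret prob_space M by (rule M)
  define \<mu> where "\<mu> = integral\<^sup>L M X"
  define P where "P = measure M A"
  have Xm: "X \<in> borel_measurable M" and Xi: "integrable M X"
    and ei: "\<And>l. integrable M (\<lambda>\<omega>. exp (l * (X \<omega> - \<mu>)))"
    and eb: "\<And>l. integral\<^sup>L M (\<lambda>\<omega>. exp (l * (X \<omega> - \<mu>))) \<le> exp (\<sigma>\<^sup>2 * l\<^sup>2 / 2)"
    using sg unfolding subgaussian_def \<mu>_def by auto
  define D where "D = integral\<^sup>L M (\<lambda>\<omega>. (X \<omega> - \<mu>) * indicator A \<omega>)"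
  have i1: "integrable M (\<lambda>\<omega>. X \<omega> * indicator A \<omega>)"
    by (rule integrable_real_mult_indicator[OF A Xi])
  have i2: "integrable M (\<lambda>\<omega>. \<mu> * indicator A \<omega>)"
    by (rule integrable_real_mult_indicator[OF A]) simp
  have PA: "integral\<^sup>L M (indicator A :: _ \<Rightarrow> real) = P"
    using A unfolding P_def by (simp add: Int_absorb2 sets.sets_into_space)
  have split: "integral\<^sup>L M (\<lambda>\<omega>. X \<omega> * indicator A \<omega>) = \<mu> * P + D"
  proof -
    have "D = integral\<^sup>L M (\<lambda>\<omega>. X \<omega> * indicator A \<omega> - \<mu> * indicator A \<omega>)"
      unfolding D_def by (simp add: algebra_simps)
    also have "\<dots> = integral\<^sup>L M (\<lambda>\<omega>. X \<omega> * indicator A \<omega>) - integral\<^sup>L M (\<lambda>\<omega>. \<mu> * indicator A \<omega>)"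
      by (rule Bochner_Integration.integral_diff[OF i1 i2])
    also have "integral\<^sup>L M (\<lambda>\<omega>. \<mu> * indicator A \<omega>) = \<mu> * P"
      using PA by simp
    finally show ?thesis by simp
  qed
  have P01: "0 \<le> P" "P \<le> 1" unfolding P_def by auto
  show ?thesis
  proof (cases "P = 0")
    case True
    have "A \<in> null_sets M" using A True unfolding P_def by (simp add: emeasure_eq_measure null_sets_def)
    then have "AE \<omega> in M. \<omega> \<notin> A" by (rule AE_not_in)
    then have "AE \<omega> in M. (X \<omega> - \<mu>) * indicator A \<omega> = 0" by eventually_elim simp
    then have "D = 0" unfolding D_def by (rule integral_eq_zero_AE)
    then show ?thesis using split True unfolding P_def \<mu>_def by (simp add: gg_def)
  next
    case False
    then have P0: "0 < P" using P01 by simp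
    have key: "l * D \<le> P * (\<sigma>^2 * l^2 / 2 - ln P)" if l: "0 < l" for l
    proof -
      define E where "E = exp (\<sigma>\<^sup>2 * l\<^sup>2 / 2)"
      define t where "t = E / P"
      have E0: "0 < E" unfolding E_def by simp
      have t0: "0 < t" unfolding t_def using E0 P0 by simp
      have pw: "u \<le> exp u / t + ln t - 1" for u
      proof -
        have "ln (exp u / t) \<le> exp u / t - 1" using t0 by (intro ln_le_minus_one) simp
        moreover have "ln (exp u / t) = u - ln t" using t0 by (simp add: ln_div)
        ultimately show ?thesis by simp
      qed
      have ie: "integrable M (\<lambda>\<omega>. exp (l * (X \<omega> - \<mu>)) * indicator A \<omega>)"
        by (rule integrable_real_mult_indicator[OF A ei])
      have iu: "integrable M (\<lambda>\<omega>. (X \<omega> - \<mu>) * indicator A \<omega>)"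
        by (rule integrable_real_mult_indicator[OF A]) (use Xi in simp)
      have "l * D = integral\<^sup>L M (\<lambda>\<omega>. l * (X \<omega> - \<mu>) * indicator A \<omega>)"
        unfolding D_def by (simp add: mult.assoc)
      also have "\<dots> \<le> integral\<^sup>L M (\<lambda>\<omega>. exp (l * (X \<omega> - \<mu>)) * indicator A \<omega> / t + (ln t - 1) * indicator A \<omega>)"
      proof (rule integral_mono)
        show "integrable M (\<lambda>\<omega>. l * (X \<omega> - \<mu>) * indicator A \<omega>)"
          using iu by (simp add: mult.assoc)
        show "integrable M (\<lambda>\<omega>. exp (l * (X \<omega> - \<mu>)) * indicator A \<omega> / t + (ln t - 1) * indicator A \<omega>)"
        proof -
          have i3: "integrable M (\<lambda>\<omega>. exp (l * (X \<omega> - \<mu>)) * indicator A \<omega> / t)"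
            using ie by simp
          have i4: "integrable M (\<lambda>\<omega>. (ln t - 1) * indicator A \<omega>)"
            by (rule integrable_real_mult_indicator[OF A]) simp
          show ?thesis by (rule Bochner_Integration.integrable_add[OF i3 i4])
        qed
        show "l * (X \<omega> - \<mu>) * indicator A \<omega> \<le> exp (l * (X \<omega> - \<mu>)) * indicator A \<omega> / t + (ln t - 1) * indicator A \<omega>"
          for \<omega>
          using pw[of "l * (X \<omega> - \<mu>)"] by (cases "\<omega> \<in> A") auto
      qed
      also have "\<dots> = integral\<^sup>L M (\<lambda>\<omega>. exp (l * (X \<omega> - \<mu>)) * indicator A \<omega>) / t + (ln t - 1) * P"
      proof -
        have i3: "integrable M (\<lambda>\<omega>. exp (l * (X \<omega> - \<mu>)) * indicator A \<omega> / t)"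
          using ie by simp
        have i4: "integrable M (\<lambda>\<omega>. (ln t - 1) * indicator A \<omega>)"
          by (rule integrable_real_mult_indicator[OF A]) simp
        show ?thesis
          using PA by (simp add: Bochner_Integration.integral_add[OF i3 i4])
      qed
      also have "\<dots> \<le> E / t + (ln t - 1) * P"
      proof -
        have "integral\<^sup>L M (\<lambda>\<omega>. exp (l * (X \<omega> - \<mu>)) * indicator A \<omega>) \<le> integral\<^sup>L M (\<lambda>\<omega>. exp (l * (X \<omega> - \<mu>)))"
          by (rule integral_mono[OF ie ei]) (simp add: indicator_def)
        also have "\<dots> \<le> E" unfolding E_def by (rule eb)
        finally show ?thesis using t0 by (simp add: divide_right_mono)
      qed
      also have "\<dots> = P * (\<sigma>^2 * l^2 / 2 - ln P)"
      proof -
        have e1: "E / t = P" unfolding t_def using E0 P0 by simp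
        have e2: "ln t = \<sigma>^2 * l^2 / 2 - ln P"
          unfolding t_def E_def using P0 by (simp add: ln_div)
        show ?thesis unfolding e1 e2 by (simp add: algebra_simps)
      qed
      finally show ?thesis .
    qed
    have "D \<le> \<sigma> * (P * sqrt (- 2 * ln P))"
      by (rule elem_opt[OF P0 P01(2) s0 key])
    then show ?thesis using split P0 unfolding P_def \<mu>_def by (simp add: gg_pos_eq)
  qed
qed


lemma tau_term:
  assumes "0 < s" "s < 1" "0 < \<sigma>" "0 < \<tau>"
  shows "\<sigma> * sqrt (- 2 * ln s) \<le> \<sigma>\<^sup>2 / (2 * \<tau>) - \<tau> * ln s"
proof -
  define r where "r = sqrt (- 2 * ln s)"
  have r2: "r^2 = - 2 * ln s" unfolding r_def using assms by simp
  then have lns: "ln s = (0 - r^2) / 2" by simp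
  have "0 \<le> (\<sigma> - \<tau> * r)^2 / (2 * \<tau>)" using assms by simp
  also have "(\<sigma> - \<tau> * r)^2 / (2 * \<tau>) = \<sigma>\<^sup>2 / (2 * \<tau>) - \<tau> * ln s - \<sigma> * r"
    unfolding lns using assms by (simp add: field_simps power2_eq_square)
  finally show ?thesis unfolding r_def by simp
qed

lemma tau_opt:
  assumes "0 < s" "s < 1" "0 < \<sigma>"
  shows "\<sigma>\<^sup>2 / (2 * (\<sigma> / sqrt (- 2 * ln s))) - (\<sigma> / sqrt (- 2 * ln s)) * ln s = \<sigma> * sqrt (- 2 * ln s)"
proof -
  define r where "r = sqrt (- 2 * ln s)"
  have r: "0 < r" unfolding r_def using assms by simp
  have r2: "r^2 = - 2 * ln s" unfolding r_def using assms by simp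
  then have lns: "ln s = (0 - r^2) / 2" by simp
  show ?thesis unfolding r_def[symmetric] lns using r assms by (simp add: field_simps power2_eq_square)
qed

lemma part_i:
  assumes p: "\<forall>x. 0 < p $ x \<and> p $ x < 1" and sg: "\<forall>x. 0 < \<sigma> x"
  shows "(let \<tau>s = (\<lambda>x. \<sigma> x / sqrt (- 2 * ln (p $ x))) in
           (\<forall>x. 0 < \<tau>s x) \<and>
           (\<forall>\<tau>. (\<forall>x. 0 < \<tau> x) \<longrightarrow> Vtau \<mu> \<sigma> \<tau>s p \<le> Vtau \<mu> \<sigma> \<tau> p) \<and>
           Vtau \<mu> \<sigma> \<tau>s p = Vfun \<mu> \<sigma> p)"
proof -
  define \<tau>s where "\<tau>s = (\<lambda>x. \<sigma> x / sqrt (- 2 * ln (p $ x)))"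
  have t1: "\<forall>x. 0 < \<tau>s x"
  proof
    fix x
    have "0 < sqrt (- 2 * ln (p $ x))" using p by simp
    then show "0 < \<tau>s x" unfolding \<tau>s_def using sg by (simp add: divide_pos_pos)
  qed
  have trm: "\<mu> x + (\<sigma> x)\<^sup>2 / (2 * \<tau>s x) - \<tau>s x * ln (p $ x) = \<mu> x + \<sigma> x * sqrt (- 2 * ln (p $ x))" for x
    using tau_opt[of "p $ x" "\<sigma> x"] p sg unfolding \<tau>s_def by force
  have eq: "Vtau \<mu> \<sigma> \<tau>s p = (\<Sum>x\<in>UNIV. p $ x * (\<mu> x + \<sigma> x * sqrt (- 2 * ln (p $ x))))"
    unfolding Vtau_def trm ..
  have t2: "\<forall>\<tau>. (\<forall>x. 0 < \<tau> x) \<longrightarrow> Vtau \<mu> \<sigma> \<tau>s p \<le> Vtau \<mu> \<sigma> \<tau> p"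
  proof (intro allI impI)
    fix \<tau> :: "'a \<Rightarrow> real" assume t: "\<forall>x. 0 < \<tau> x"
    show "Vtau \<mu> \<sigma> \<tau>s p \<le> Vtau \<mu> \<sigma> \<tau> p"
      unfolding eq unfolding Vtau_def
    proof (intro sum_mono mult_left_mono)
      fix x
      have "\<sigma> x * sqrt (- 2 * ln (p $ x)) \<le> (\<sigma> x)\<^sup>2 / (2 * \<tau> x) - \<tau> x * ln (p $ x)"
        using tau_term[of "p $ x" "\<sigma> x" "\<tau> x"] p sg t by blast
      then show "\<mu> x + \<sigma> x * sqrt (- 2 * ln (p $ x)) \<le> \<mu> x + (\<sigma> x)\<^sup>2 / (2 * \<tau> x) - \<tau> x * ln (p $ x)"
        by linarith
      show "0 \<le> p $ x" using p less_imp_le by blast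
    qed
  qed
  have t3: "Vtau \<mu> \<sigma> \<tau>s p = Vfun \<mu> \<sigma> p"
    unfolding eq Vfun_def
  proof (intro sum.cong refl)
    fix x
    have px: "p $ x \<noteq> 0" using p by (metis less_irrefl)
    have "2 * ln (1 / p $ x) = - 2 * ln (p $ x)" using p by (simp add: ln_div)
    then show "p $ x * (\<mu> x + \<sigma> x * sqrt (- 2 * ln (p $ x))) =
      (if p $ x = 0 then 0 else p $ x * (\<mu> x + sqrt (2 * ln (1 / p $ x)) * \<sigma> x))"
      using px by (simp only: if_False mult.commute)
  qed
  show ?thesis unfolding \<tau>s_def[symmetric] Let_def using t1 t2 t3 by blast
qed


lemma part_iii:
  fixes M :: "'b measure" and F :: "'b \<Rightarrow> 'a::finite \<Rightarrow> real"
    and \<mu> \<sigma> :: "'a \<Rightarrow> real"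
  assumes M: "prob_space M"
    and subg: "\<And>x. subgaussian M (\<lambda>\<omega>. F \<omega> x) (\<sigma> x)"
    and mean: "\<And>x. \<mu> x = integral\<^sup>L M (\<lambda>\<omega>. F \<omega> x)"
    and sigma_nonneg: "\<And>x. 0 \<le> \<sigma> x"
    and uniq: "AE \<omega> in M. \<exists>!x. \<forall>y. F \<omega> y \<le> F \<omega> x"
    and \<pi>_def: "\<pi> = (\<chi> x. measure M {\<omega> \<in> space M. \<forall>y. F \<omega> y \<le> F \<omega> x})"
  shows "\<pi> \<in> prob_simplex \<and>
           (\<exists>p\<in>prob_simplex. (\<forall>q\<in>prob_simplex. Vfun \<mu> \<sigma> q \<le> Vfun \<mu> \<sigma> p) \<and> Vfun \<mu> \<sigma> \<pi> \<le> Vfun \<mu> \<sigma> p) \<and>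
           integral\<^sup>L M (\<lambda>\<omega>. Max (range (F \<omega>))) \<le> Vfun \<mu> \<sigma> \<pi>"
proof -
  interpret prob_space M by (rule M)
  define A where "A x = {\<omega> \<in> space M. \<forall>y. F \<omega> y \<le> F \<omega> x}" for x
  have Fm[measurable]: "(\<lambda>\<omega>. F \<omega> x) \<in> borel_measurable M" for x
    using subg[of x] unfolding subgaussian_def by blast
  have Fi: "integrable M (\<lambda>\<omega>. F \<omega> x)" for x
    using subg[of x] unfolding subgaussian_def by blast
  have Am[measurable]: "A x \<in> sets M" for x
    unfolding A_def by measurable
  have pi: "\<pi> $ x = measure M (A x)" for x
    unfolding \<pi>_def A_def by simp
  have AEsum: "AE \<omega> in M. (\<Sum>x\<in>UNIV. indicator (A x) \<omega> :: real) = 1 \<and>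
       Max (range (F \<omega>)) = (\<Sum>x\<in>UNIV. F \<omega> x * indicator (A x) \<omega>)"
    using uniq AE_space
  proof eventually_elim
    case (elim \<omega>)
    then have sp: "\<omega> \<in> space M" by blast
    from elim obtain x0 where x0: "\<forall>y. F \<omega> y \<le> F \<omega> x0" and un: "\<And>x. \<forall>y. F \<omega> y \<le> F \<omega> x \<Longrightarrow> x = x0"
      by blast
    have ind: "(indicator (A x) \<omega> :: real) = (if x = x0 then 1 else 0)" if "\<omega> \<in> space M" for x
      proof (cases "x = x0")
      case True
      have "\<omega> \<in> A x" using x0 that True unfolding A_def by simp
      then show ?thesis using True by simp
    next
      case False
      have "\<omega> \<notin> A x" using un False unfolding A_def by blast
      then show ?thesis using False by simp
    qed
    have s1: "(\<Sum>x\<in>UNIV. indicator (A x) \<omega> :: real) = (\<Sum>x\<in>UNIV. if x = x0 then 1 else 0)"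
      by (intro sum.cong refl) (simp add: ind[OF sp])
    have s2: "(\<Sum>x\<in>UNIV. F \<omega> x * indicator (A x) \<omega>) = (\<Sum>x\<in>UNIV. if x = x0 then F \<omega> x else 0)"
      by (intro sum.cong refl) (simp add: ind[OF sp])
    have mx: "Max (range (F \<omega>)) = F \<omega> x0"
      by (rule Max_eqI) (use x0 in auto)
    show ?case unfolding s1 s2 mx by simp
  qed
  have ii: "integrable M (\<lambda>\<omega>. indicator (A x) \<omega> :: real)" for x
    using integrable_real_mult_indicator[OF Am integrable_const[of 1]] by simp
  have ia: "integral\<^sup>L M (\<lambda>\<omega>. indicator (A x) \<omega> :: real) = measure M (A x)" for x
  proof -
    have "A x \<inter> space M = A x" unfolding A_def by auto
    then show ?thesis by simp
  qed
  have pisum: "(\<Sum>x\<in>UNIV. \<pi> $ x) = 1"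
  proof -
    have "(\<Sum>x\<in>UNIV. \<pi> $ x) = (\<Sum>x\<in>UNIV. integral\<^sup>L M (\<lambda>\<omega>. indicator (A x) \<omega> :: real))"
      by (simp add: pi ia)
    also have "\<dots> = integral\<^sup>L M (\<lambda>\<omega>. \<Sum>x\<in>UNIV. indicator (A x) \<omega> :: real)"
      by (rule Bochner_Integration.integral_sum[symmetric]) (rule ii)
    also have "\<dots> = integral\<^sup>L M (\<lambda>\<omega>. 1 :: real)"
      by (rule integral_cong_AE) (use AEsum in \<open>auto elim: AE_mp\<close>)
    also have "\<dots> = 1" by (simp add: prob_space)
    finally show ?thesis .
  qed
  have pis: "\<pi> \<in> prob_simplex"
    unfolding prob_simplex_def using pisum by (simp add: pi)
  obtain pm where pm: "pm \<in> prob_simplex" "\<forall>q\<in>prob_simplex. Vfun \<mu> \<sigma> q \<le> Vfun \<mu> \<sigma> pm"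
    using continuous_attains_sup[OF compact_simplex _ cont_Vfun] pis by blast
  have maxm: "(\<lambda>\<omega>. Max (range (F \<omega>))) \<in> borel_measurable M"
    using borel_measurable_Max[of UNIV "\<lambda>i \<omega>. F \<omega> i" M] by simp
  have "integral\<^sup>L M (\<lambda>\<omega>. Max (range (F \<omega>))) = integral\<^sup>L M (\<lambda>\<omega>. \<Sum>x\<in>UNIV. F \<omega> x * indicator (A x) \<omega>)"
  proof (rule integral_cong_AE[OF maxm])
    show "(\<lambda>\<omega>. \<Sum>x\<in>UNIV. F \<omega> x * indicator (A x) \<omega>) \<in> borel_measurable M" by measurable
    show "AE \<omega> in M. Max (range (F \<omega>)) = (\<Sum>x\<in>UNIV. F \<omega> x * indicator (A x) \<omega>)"
      using AEsum by eventually_elim blast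
  qed
  also have "\<dots> = (\<Sum>x\<in>UNIV. integral\<^sup>L M (\<lambda>\<omega>. F \<omega> x * indicator (A x) \<omega>))"
    by (rule Bochner_Integration.integral_sum) (rule integrable_real_mult_indicator[OF Am Fi])
  also have "\<dots> \<le> (\<Sum>x\<in>UNIV. \<mu> x * \<pi> $ x + \<sigma> x * gg (\<pi> $ x))"
  proof (rule sum_mono)
    fix x
    show "integral\<^sup>L M (\<lambda>\<omega>. F \<omega> x * indicator (A x) \<omega>) \<le> \<mu> x * \<pi> $ x + \<sigma> x * gg (\<pi> $ x)"
      using sg_bound[OF M subg[of x] Am[of x] sigma_nonneg[of x]] unfolding pi mean[of x] .
  qed
  also have "\<dots> = Vfun \<mu> \<sigma> \<pi>" by (rule Vfun_eq[symmetric])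
  finally have emax: "integral\<^sup>L M (\<lambda>\<omega>. Max (range (F \<omega>))) \<le> Vfun \<mu> \<sigma> \<pi>" .
  show ?thesis using pis pm emax by blast
qed

theorem mainTheorem7:
  fixes M :: "'b measure" and F :: "'b \<Rightarrow> 'a::finite \<Rightarrow> real"
    and \<mu> \<sigma> :: "'a \<Rightarrow> real"
  assumes "prob_space M"
    and subg: "\<And>x. subgaussian M (\<lambda>\<omega>. F \<omega> x) (\<sigma> x)"
    and mean: "\<And>x. \<mu> x = integral\<^sup>L M (\<lambda>\<omega>. F \<omega> x)"
    and sigma_nonneg: "\<And>x. 0 \<le> \<sigma> x"
  shows
    \<comment> \<open>(i)\<close>
    "(\<forall>p \<in> prob_simplex. (\<forall>x. 0 < p $ x \<and> p $ x < 1) \<and> (\<forall>x. 0 < \<sigma> x) \<longrightarrow>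
        (let \<tau>s = (\<lambda>x. \<sigma> x / sqrt (- 2 * ln (p $ x))) in
           (\<forall>x. 0 < \<tau>s x) \<and>
           (\<forall>\<tau>. (\<forall>x. 0 < \<tau> x) \<longrightarrow> Vtau \<mu> \<sigma> \<tau>s p \<le> Vtau \<mu> \<sigma> \<tau> p) \<and>
           Vtau \<mu> \<sigma> \<tau>s p = Vfun \<mu> \<sigma> p))
     \<comment> \<open>(ii)\<close>
     \<and> concave_on prob_simplex (Vfun \<mu> \<sigma>)
     \<and> ((\<forall>x. 0 < \<sigma> x) \<longrightarrow> strictly_concave_on prob_simplex (Vfun \<mu> \<sigma>))
     \<comment> \<open>(iii)\<close>
     \<and> ((AE \<omega> in M. \<exists>!x. \<forall>y. F \<omega> y \<le> F \<omega> x) \<longrightarrow>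
        (let \<pi> = (\<chi> x. measure M {\<omega> \<in> space M. \<forall>y. F \<omega> y \<le> F \<omega> x}) in
           \<pi> \<in> prob_simplex \<and>
           (\<exists>p\<in>prob_simplex. (\<forall>q\<in>prob_simplex. Vfun \<mu> \<sigma> q \<le> Vfun \<mu> \<sigma> p) \<and> Vfun \<mu> \<sigma> \<pi> \<le> Vfun \<mu> \<sigma> p) \<and>
           integral\<^sup>L M (\<lambda>\<omega>. Max (range (F \<omega>))) \<le> Vfun \<mu> \<sigma> \<pi>))"
proof (intro conjI)
  show "\<forall>p\<in>prob_simplex. (\<forall>x. 0 < p $ x \<and> p $ x < 1) \<and> (\<forall>x. 0 < \<sigma> x) \<longrightarrow>
        (let \<tau>s = (\<lambda>x. \<sigma> x / sqrt (- 2 * ln (p $ x))) in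
           (\<forall>x. 0 < \<tau>s x) \<and>
           (\<forall>\<tau>. (\<forall>x. 0 < \<tau> x) \<longrightarrow> Vtau \<mu> \<sigma> \<tau>s p \<le> Vtau \<mu> \<sigma> \<tau> p) \<and>
           Vtau \<mu> \<sigma> \<tau>s p = Vfun \<mu> \<sigma> p)"
  proof (intro ballI impI)
    fix p :: "real ^ 'a" assume "(\<forall>x. 0 < p $ x \<and> p $ x < 1) \<and> (\<forall>x. 0 < \<sigma> x)"
    then show "let \<tau>s = (\<lambda>x. \<sigma> x / sqrt (- 2 * ln (p $ x))) in
           (\<forall>x. 0 < \<tau>s x) \<and>
           (\<forall>\<tau>. (\<forall>x. 0 < \<tau> x) \<longrightarrow> Vtau \<mu> \<sigma> \<tau>s p \<le> Vtau \<mu> \<sigma> \<tau> p) \<and>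
           Vtau \<mu> \<sigma> \<tau>s p = Vfun \<mu> \<sigma> p"
      using part_i[of p \<sigma> \<mu>] by blast
  qed
  show "concave_on prob_simplex (Vfun \<mu> \<sigma>)" by (rule Vfun_concave[OF sigma_nonneg])
  show "(\<forall>x. 0 < \<sigma> x) \<longrightarrow> strictly_concave_on prob_simplex (Vfun \<mu> \<sigma>)"
    using Vfun_strict by blast
  show "(AE \<omega> in M. \<exists>!x. \<forall>y. F \<omega> y \<le> F \<omega> x) \<longrightarrow>
        (let \<pi> = (\<chi> x. measure M {\<omega> \<in> space M. \<forall>y. F \<omega> y \<le> F \<omega> x}) in
           \<pi> \<in> prob_simplex \<and>
           (\<exists>p\<in>prob_simplex. (\<forall>q\<in>prob_simplex. Vfun \<mu> \<sigma> q \<le> Vfun \<mu> \<sigma> p) \<and> Vfun \<mu> \<sigma> \<pi> \<le> Vfun \<mu> \<sigma> p) \<and>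
           integral\<^sup>L M (\<lambda>\<omega>. Max (range (F \<omega>))) \<le> Vfun \<mu> \<sigma> \<pi>)"
  proof
    assume u: "AE \<omega> in M. \<exists>!x. \<forall>y. F \<omega> y \<le> F \<omega> x"
    show "let \<pi> = (\<chi> x. measure M {\<omega> \<in> space M. \<forall>y. F \<omega> y \<le> F \<omega> x}) in
           \<pi> \<in> prob_simplex \<and>
           (\<exists>p\<in>prob_simplex. (\<forall>q\<in>prob_simplex. Vfun \<mu> \<sigma> q \<le> Vfun \<mu> \<sigma> p) \<and> Vfun \<mu> \<sigma> \<pi> \<le> Vfun \<mu> \<sigma> p) \<and>
           integral\<^sup>L M (\<lambda>\<omega>. Max (range (F \<omega>))) \<le> Vfun \<mu> \<sigma> \<pi>"
      unfolding Let_def by (rule part_iii[OF assms(1-4) u refl])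
  qed
qed

end
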